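(* Let $\mathbb G$ be a special 2-group, $(n,\rho,\beta,c)$, $(n',\rho',\beta',c')$ admissible quadruples, and let $\xi,\bar\xi:\mathcal F(n,\rho,\beta,c)\to\mathcal F(n',\rho',\beta',c')$ be gauge trivial 1-intertwiners corresponding (as in the description of 1-intertwiners) to triples $(\mathbf R,\mathbf I,\mathsf S)$ and $(\bar{\mathbf R},\mathbf I,\bar{\mathsf S})$. Then 2-intertwiners $\xi\Rightarrow\bar\xi$ are in bijection with $n'\times n$ arrays $\mathsf T$ whose entry $\mathsf T_{i',i}$ is a complex $\bar R_{i'i}\times R_{i'i}$ matrix if $\bar R_{i'i},R_{i'i}\ne0$ and empty otherwise, satisfying $$\mathsf T_{i',i}\,\mathsf S_{i',i}(g)=\bar{\mathsf S}_{i',i}(g)\,\mathsf T_{\rho'(g)^{-1}(i'),\rho(g)^{-1}(i)}$$ for all $(i',i)\in\mathrm{Sup}(\mathbf R)\cap\mathrm{Sup}(\bar{\mathbf R})$ and all $g\in\pi_0(\mathbb G)$. Under this bijection the vertical composite of $\mathsf T:\xi\Rightarrow\bar\xi$ and $\bar{\mathsf T}:\bar\xi\Rightarrow\bar{\bar\xi}$ is the array with entries $(\bar{\mathsf T}\cdot\mathsf T)_{i',i}=\bar{\mathsf T}_{i',i}\mathsf T_{i',i}$.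
   Context: A special 2-group $\mathbb G$: skeletal monoidal groupoid, strictly invertible objects, $l,r$ identities; objects form $\pi_0(\mathbb G)$; $\pi_1(\mathbb G)=\mathrm{Aut}(e)$ a $\pi_0(\mathbb G)$-module via $g\cdot u=\gamma_g^{-1}(\delta_g(u))$, $\gamma_g(u)=u\otimes\mathrm{id}_g$, $\delta_g(u)=\mathrm{id}_g\otimes u$; canonical 3-cocycle $\alpha(g_1,g_2,g_3)=\gamma^{-1}_{g_1g_2g_3}(a_{g_1,g_2,g_3})$. $\mathbf{2Mat}_{\mathbb C}$: objects $n\ge0$; for $n,m\ge1$ a 1-morphism $n\to m$ is $(\mathbf R,s)$, $\mathbf R$ an $m\times n$ matrix over $\mathbb N$, $s=(s_i)$ a gauge with $s_i(\mathbf a)\in GL((\mathbf R\mathbf a)_i,\mathbb C)$ ($=1$ if $(\mathbf R\mathbf a)_i=0$), $s_i(\mathbf e_j)=\mathbf I_{R_{ij}}$; a 2-morphism $(\mathbf R,s)\Rightarrow(\mathbf R',s')$ is an $m\times n$ array with $(i,j)$ entry an $R'_{ij}\times R_{ij}$ complex matrix if $R_{ij},R'_{ij}\ne0$, empty otherwise; vertical composition entrywise product; composition $(\tilde{\mathbf R},\tilde s)\circ(\mathbf R,s)=(\tilde{\mathbf R}\mathbf R,\tilde s\ast s)$, $(\tilde s\ast s)_k(\mathbf a)=\tilde s_k(\mathbf R\mathbf a)\big(\bigoplus_{i}\mathbf I_{\tilde R_{ki}}\otimes s_i(\mathbf a)\big)\mathbf P(\tilde{\mathbf R}_k,\mathbf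 R,\mathbf a)\big(\bigoplus_j \tilde s_k(\mathbf R\mathbf e_j)^{-1}\otimes\mathbf I_{a_j}\big)$, $\mathbf P(\cdot)$ fixed permutation matrices (identities when $\tilde{\mathbf R}_k$ or $\mathbf a$ is a standard basis vector, $\mathbf R$ an identity, or $\mathbf R$ one column); horizontal composition $(\tilde{\mathsf T}\circ\mathsf T)_{kj}=\tilde s'_k(\mathbf R'\mathbf e_j)\big(\bigoplus_i\tilde{\mathsf T}_{ki}\otimes\mathsf T_{ij}\big)\tilde s_k(\mathbf R\mathbf e_j)^{-1}$; identities $(\mathbf I_n,\mathbf I)$, $\mathbf I$ trivial gauge. Representations and intertwiners: a 2-matrix representation is $(n,\mathbb F)$, $\mathbb F=(F,F_2,F_0):\mathbb G\to\mathsf{Equiv}_{\mathbf{2Mat}_{\mathbb C}}(n)$ monoidal; a 1-intertwiner $(f,\Phi)$ has $f:n\to n'$ and invertible $\Phi(A):F'(A)\circ f\Rightarrow f\circ F(A)$ natural and coherent; a 2-intertwiner $(f,\Phi)\Rightarrow(g,\Psi)$ is $\tau:f\Rightarrow g$ with $\Psi(A)\cdot(1_{F'(A)}\circ\tau)=(\tau\circ1_{F(A)})\cdot\Phi(A)$ for all objects $A$. Admissible quadruple $(n,\rho,\beta,c)$: $n\ge1$, $\rho:\pi_0(\mathbb G)\to S_n$, $\beta:\pi_1(\mathbb G)\to(\mathbb C^* )^n_\rho$ module homomorphism ($S_n$ acting by $(\sigma\cdot\boldsymbol\lambda)_i=\lambda_{\sigma^{-1}(i)}$) with $[\beta\circ\alpha]=0$,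 $c$ normalized 2-cochain with $\partial c=\beta\circ\alpha$. $\mathcal F(n,\rho,\beta,c)=(n,\mathbb F)$, $F(g)=(\mathbf P(\rho(g)),\mathbf I)$ with $\mathbf P(\sigma)_{ij}=\delta_{i,\sigma(j)}$, $F(\varphi)$ with only nonempty entries $\beta(\gamma_g^{-1}\varphi)_{\rho(g)(j)}$ at $(\rho(g)(j),j)$, $F_2(g_1,g_2)$ with entries $c(g_1,g_2)_{\rho(g_1g_2)(j)}$ at $(\rho(g_1g_2)(j),j)$, $F_0$ identity. A triple $(\mathbf R,s,\mathsf S)$ ($\mathbf R$ rank matrix, $s$ gauge, $\mathsf S_{i',i}:\pi_0(\mathbb G)\to GL(R_{i'i})$ for $(i',i)\in\mathrm{Sup}(\mathbf R)=\{R_{i'i}\ne0\}$) corresponds to the 1-intertwiner $((\mathbf R,s),\Phi)$ with $\Phi(g)_{i',\rho(g)^{-1}(i)}=\mathsf S_{i',i}(g)$; it is gauge trivial if $s=\mathbf I$. *)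

theory Defs
  imports "Jordan_Normal_Form.Matrix" "HOL-Algebra.Group"
begin

abbreviation pinv :: "(nat \<Rightarrow> nat) \<Rightarrow> nat \<Rightarrow> nat" where
  "pinv \<sigma> \<equiv> Hilbert_Choice.inv \<sigma>"

definition dsum :: "complex mat \<Rightarrow> complex mat \<Rightarrow> complex mat" where
  "dsum A B = four_block_mat A (0\<^sub>m (dim_row A) (dim_col B)) (0\<^sub>m (dim_row B) (dim_col A)) B"

definition dsum_list :: "complex mat list \<Rightarrow> complex mat" where
  "dsum_list xs = foldr dsum xs (0\<^sub>m 0 0)"

definition kron :: "complex mat \<Rightarrow> complex mat \<Rightarrow> complex mat" where
  "kron A B = mat (dim_row A * dim_row B) (dim_col A * dim_col B)
     (\<lambda>(i,j). A $$ (i div dim_row B, j div dim_col B) * B $$ (i mod dim_row B, j mod dim_col B))"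

definition minv :: "complex mat \<Rightarrow> complex mat" where
  "minv A = (SOME B. B \<in> carrier_mat (dim_col A) (dim_row A) \<and> A * B = 1\<^sub>m (dim_row A) \<and> B * A = 1\<^sub>m (dim_col A))"

definition GL_mat :: "nat \<Rightarrow> complex mat set" where
  "GL_mat k = {A \<in> carrier_mat k k. invertible_mat A}"

text \<open>A rank matrix of a 1-morphism n \<rightarrow> m is an m x n matrix over nat.
  A gauge s is represented by the function k a \<mapsto> s_k(a) (a a vector in N^n).
  A 2-morphism (R,s) \<Rightarrow> (R',s') is an m x n array of complex matrices whose
  (i,j) entry is an R'_ij x R_ij matrix; when R_ij or R'_ij is 0 this matrix
  is the (unique) empty matrix.\<close>

type_synonym gauge = "nat \<Rightarrow> nat vec \<Rightarrow> complex mat"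
type_synonym array2 = "complex mat mat"

definition triv_gauge :: "nat mat \<Rightarrow> gauge" where
  "triv_gauge R = (\<lambda>k a. 1\<^sub>m ((R *\<^sub>v a) $ k))"

definition two_mor :: "nat mat \<Rightarrow> nat mat \<Rightarrow> array2 set" where
  "two_mor R R' = {T. T \<in> carrier_mat (dim_row R) (dim_col R) \<and>
      dim_row R' = dim_row R \<and> dim_col R' = dim_col R \<and>
      (\<forall>i < dim_row R. \<forall>j < dim_col R. T $$ (i,j) \<in> carrier_mat (R' $$ (i,j)) (R $$ (i,j)))}"

definition vcomp :: "array2 \<Rightarrow> array2 \<Rightarrow> array2" where
  "vcomp T' T = mat (dim_row T) (dim_col T) (\<lambda>(i,j). T' $$ (i,j) * T $$ (i,j))"

definition hcomp :: "gauge \<Rightarrow> gauge \<Rightarrow> nat mat \<Rightarrow> nat mat \<Rightarrow> array2 \<Rightarrow> array2 \<Rightarrow> array2" where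
  "hcomp st st' R R' Tt T = mat (dim_row Tt) (dim_col T) (\<lambda>(k,j).
      st' k (col R' j) * dsum_list (map (\<lambda>i. kron (Tt $$ (k,i)) (T $$ (i,j))) [0..<dim_col Tt])
        * minv (st k (col R j)))"

definition id2 :: "nat mat \<Rightarrow> array2" where
  "id2 R = mat (dim_row R) (dim_col R) (\<lambda>(i,j). 1\<^sub>m (R $$ (i,j)))"

definition perm_mat :: "nat \<Rightarrow> (nat \<Rightarrow> nat) \<Rightarrow> nat mat" where
  "perm_mat n \<sigma> = mat n n (\<lambda>(i,j). if i = \<sigma> j then 1 else 0)"

text \<open>G = pi_0, M = pi_1 (abelian, written multiplicatively), act g u = g . u,
  alpha the canonical (normalized) 3-cocycle.\<close>
definition special_2group_data ::
  "('g,'x) monoid_scheme \<Rightarrow> ('u,'y) monoid_scheme \<Rightarrow> ('g \<Rightarrow> 'u \<Rightarrow> 'u) \<Rightarrow> ('g \<Rightarrow> 'g \<Rightarrow> 'g \<Rightarrow> 'u) \<Rightarrow> bool" where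
  "special_2group_data G M act \<alpha> \<longleftrightarrow> group G \<and> comm_group M \<and>
     (\<forall>g\<in>carrier G. act g \<in> hom M M \<and> bij_betw (act g) (carrier M) (carrier M)) \<and>
     (\<forall>u\<in>carrier M. act \<one>\<^bsub>G\<^esub> u = u) \<and>
     (\<forall>g\<in>carrier G. \<forall>h\<in>carrier G. \<forall>u\<in>carrier M. act (g \<otimes>\<^bsub>G\<^esub> h) u = act g (act h u)) \<and>
     (\<forall>g1\<in>carrier G. \<forall>g2\<in>carrier G. \<forall>g3\<in>carrier G. \<alpha> g1 g2 g3 \<in> carrier M) \<and>
     (\<forall>g\<in>carrier G. \<forall>h\<in>carrier G.
        \<alpha> \<one>\<^bsub>G\<^esub> g h = \<one>\<^bsub>M\<^esub> \<and> \<alpha> g \<one>\<^bsub>G\<^esub> h = \<one>\<^bsub>M\<^esub> \<and> \<alpha> g h \<one>\<^bsub>G\<^esub> = \<one>\<^bsub>M\<^esub>) \<and>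
     (\<forall>g1\<in>carrier G. \<forall>g2\<in>carrier G. \<forall>g3\<in>carrier G. \<forall>g4\<in>carrier G.
        act g1 (\<alpha> g2 g3 g4) \<otimes>\<^bsub>M\<^esub> \<alpha> g1 (g2 \<otimes>\<^bsub>G\<^esub> g3) g4 \<otimes>\<^bsub>M\<^esub> \<alpha> g1 g2 g3
        = \<alpha> (g1 \<otimes>\<^bsub>G\<^esub> g2) g3 g4 \<otimes>\<^bsub>M\<^esub> \<alpha> g1 g2 (g3 \<otimes>\<^bsub>G\<^esub> g4))"

text \<open>rho : pi_0 \<rightarrow> S_n, permutations of {0..<n}; a vector of (C^*)^n is a function
  nat \<Rightarrow> complex, only its values at i < n matter; (sigma . lambda)_i = lambda_{sigma^-1 i}.\<close>
definition perm_rep :: "('g,'x) monoid_scheme \<Rightarrow> nat \<Rightarrow> ('g \<Rightarrow> nat \<Rightarrow> nat) \<Rightarrow> bool" where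
  "perm_rep G n \<rho> \<longleftrightarrow> (\<forall>g\<in>carrier G. \<rho> g permutes {..<n}) \<and>
     (\<forall>g\<in>carrier G. \<forall>h\<in>carrier G. \<rho> (g \<otimes>\<^bsub>G\<^esub> h) = \<rho> g \<circ> \<rho> h)"

definition admissible ::
  "('g,'x) monoid_scheme \<Rightarrow> ('u,'y) monoid_scheme \<Rightarrow> ('g \<Rightarrow> 'u \<Rightarrow> 'u) \<Rightarrow> ('g \<Rightarrow> 'g \<Rightarrow> 'g \<Rightarrow> 'u)
   \<Rightarrow> nat \<Rightarrow> ('g \<Rightarrow> nat \<Rightarrow> nat) \<Rightarrow> ('u \<Rightarrow> nat \<Rightarrow> complex) \<Rightarrow> ('g \<Rightarrow> 'g \<Rightarrow> nat \<Rightarrow> complex) \<Rightarrow> bool" where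
  "admissible G M act \<alpha> n \<rho> \<beta> c \<longleftrightarrow> n \<ge> 1 \<and> perm_rep G n \<rho> \<and>
     (\<forall>u\<in>carrier M. \<forall>i<n. \<beta> u i \<noteq> 0) \<and>
     (\<forall>u\<in>carrier M. \<forall>v\<in>carrier M. \<forall>i<n. \<beta> (u \<otimes>\<^bsub>M\<^esub> v) i = \<beta> u i * \<beta> v i) \<and>
     (\<forall>g\<in>carrier G. \<forall>u\<in>carrier M. \<forall>i<n. \<beta> (act g u) i = \<beta> u (pinv (\<rho> g) i)) \<and>
     (\<forall>g\<in>carrier G. \<forall>h\<in>carrier G. \<forall>i<n. c g h i \<noteq> 0) \<and>
     (\<forall>g\<in>carrier G. \<forall>i<n. c \<one>\<^bsub>G\<^esub> g i = 1 \<and> c g \<one>\<^bsub>G\<^esub> i = 1) \<and>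
     (\<forall>g1\<in>carrier G. \<forall>g2\<in>carrier G. \<forall>g3\<in>carrier G. \<forall>i<n.
        c g2 g3 (pinv (\<rho> g1) i) * c g1 (g2 \<otimes>\<^bsub>G\<^esub> g3) i / (c (g1 \<otimes>\<^bsub>G\<^esub> g2) g3 i * c g1 g2 i)
        = \<beta> (\<alpha> g1 g2 g3) i)"

text \<open>F(g) = (P(rho g), I) on objects.\<close>
definition Fobj :: "nat \<Rightarrow> ('g \<Rightarrow> nat \<Rightarrow> nat) \<Rightarrow> 'g \<Rightarrow> nat mat" where
  "Fobj n \<rho> g = perm_mat n (\<rho> g)"

text \<open>Phi(g) : F'(g) o (R,I) \<Rightarrow> (R,I) o F(g), with Phi(g)_{i', rho(g)^-1 i} = S_{i',i}(g);
  entries outside the support are empty.\<close>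
definition Phi_of :: "nat \<Rightarrow> nat \<Rightarrow> ('g \<Rightarrow> nat \<Rightarrow> nat) \<Rightarrow> nat mat \<Rightarrow> (nat \<Rightarrow> nat \<Rightarrow> 'g \<Rightarrow> complex mat) \<Rightarrow> 'g \<Rightarrow> array2" where
  "Phi_of n n' \<rho> R S g = mat n' n (\<lambda>(i',j).
     (let i = \<rho> g j in if R $$ (i',i) \<noteq> 0 then S i' i g else 0\<^sub>m (R $$ (i',i)) (R $$ (i',i))))"

text \<open>The triple (R, I, S) describes a gauge trivial 1-intertwiner
  F(n,rho,...) \<rightarrow> F(n',rho',...): R is an n' x n rank matrix, S_{i',i}(g) \<in> GL(R_{i'i})
  on Sup(R), and Phi(g) is an (invertible) 2-morphism F'(g) o (R,I) \<Rightarrow> (R,I) o F(g).\<close>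
definition triple_intertwiner ::
  "('g,'x) monoid_scheme \<Rightarrow> nat \<Rightarrow> nat \<Rightarrow> ('g \<Rightarrow> nat \<Rightarrow> nat) \<Rightarrow> ('g \<Rightarrow> nat \<Rightarrow> nat)
   \<Rightarrow> nat mat \<Rightarrow> (nat \<Rightarrow> nat \<Rightarrow> 'g \<Rightarrow> complex mat) \<Rightarrow> bool" where
  "triple_intertwiner G n n' \<rho> \<rho>' R S \<longleftrightarrow> R \<in> carrier_mat n' n \<and>
     (\<forall>i'<n'. \<forall>i<n. R $$ (i',i) \<noteq> 0 \<longrightarrow> (\<forall>g\<in>carrier G. S i' i g \<in> GL_mat (R $$ (i',i)))) \<and>
     (\<forall>g\<in>carrier G. Phi_of n n' \<rho> R S g \<in> two_mor (Fobj n' \<rho>' g * R) (R * Fobj n \<rho> g))"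

definition two_intertwiners ::
  "('g,'x) monoid_scheme \<Rightarrow> nat \<Rightarrow> nat \<Rightarrow> ('g \<Rightarrow> nat \<Rightarrow> nat) \<Rightarrow> ('g \<Rightarrow> nat \<Rightarrow> nat)
   \<Rightarrow> nat mat \<Rightarrow> (nat \<Rightarrow> nat \<Rightarrow> 'g \<Rightarrow> complex mat)
   \<Rightarrow> nat mat \<Rightarrow> (nat \<Rightarrow> nat \<Rightarrow> 'g \<Rightarrow> complex mat) \<Rightarrow> array2 set" where
  "two_intertwiners G n n' \<rho> \<rho>' R S Rb Sb =
     {\<tau> \<in> two_mor R Rb. \<forall>g\<in>carrier G.
        vcomp (Phi_of n n' \<rho> Rb Sb g)
              (hcomp (triv_gauge (Fobj n' \<rho>' g)) (triv_gauge (Fobj n' \<rho>' g)) R Rb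
                     (id2 (Fobj n' \<rho>' g)) \<tau>)
      = vcomp (hcomp (triv_gauge R) (triv_gauge Rb) (Fobj n \<rho> g) (Fobj n \<rho> g)
                     \<tau> (id2 (Fobj n \<rho> g)))
              (Phi_of n n' \<rho> R S g)}"

end

theory Submission
  imports Defs
begin

lemma mat_empty_eq: "A \<in> carrier_mat a b \<Longrightarrow> B \<in> carrier_mat a b \<Longrightarrow> a = 0 \<or> b = 0 \<Longrightarrow> A = B"
  by (rule eq_matI) auto

lemma minv_one: "minv (1\<^sub>m k) = 1\<^sub>m k"
  unfolding minv_def
  by (rule some_equality) auto

lemma dsum_zero_left: "dsum (0\<^sub>m 0 0) B = B"
  unfolding dsum_def four_block_mat_def Let_def by (rule eq_matI) auto

lemma dsum_zero_right: "dsum A (0\<^sub>m 0 0) = A"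
  unfolding dsum_def four_block_mat_def Let_def by (rule eq_matI) auto

lemma kron_zero_left: "A \<in> carrier_mat 0 0 \<Longrightarrow> kron A B = 0\<^sub>m 0 0"
  unfolding kron_def by (rule eq_matI) auto

lemma kron_one_left: "kron (1\<^sub>m 1) B = B"
  unfolding kron_def by (rule eq_matI) auto

lemma kron_one_right: "kron A (1\<^sub>m 1) = A"
  unfolding kron_def by (rule eq_matI) auto

lemma foldr_dsum_zeros: "(\<forall>x\<in>set xs. x = 0\<^sub>m 0 0) \<Longrightarrow> foldr dsum xs X = X"
  by (induction xs) (auto simp: dsum_zero_left)

lemma upt_split3: "i0 < m \<Longrightarrow> [0..<m] = [0..<i0] @ i0 # [Suc i0..<m]"
proof -
  assume a: "i0 < m"
  have "[0..<m] = [0..<i0] @ [i0..<m]" using a upt_add_eq_append[of 0 i0 "m - i0"] by simp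
  also have "[i0..<m] = i0 # [Suc i0..<m]" using a by (rule upt_conv_Cons)
  finally show ?thesis .
qed

lemma dsum_list_single:
  assumes "i0 < m" "\<And>i. i < m \<Longrightarrow> i \<noteq> i0 \<Longrightarrow> f i = 0\<^sub>m 0 0"
  shows "dsum_list (map f [0..<m]) = f i0"
proof -
  have z1: "\<forall>x\<in>set (map f [0..<i0]). x = 0\<^sub>m 0 0" using assms by auto
  have z2: "\<forall>x\<in>set (map f [Suc i0..<m]). x = 0\<^sub>m 0 0" using assms by auto
  have "dsum_list (map f [0..<m]) = foldr dsum (map f [0..<i0]) (dsum (f i0) (foldr dsum (map f [Suc i0..<m]) (0\<^sub>m 0 0)))"
    unfolding dsum_list_def upt_split3[OF assms(1)] by simp
  also have "\<dots> = f i0" using z1 z2 by (simp add: foldr_dsum_zeros dsum_zero_right)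
  finally show ?thesis .
qed

lemma perm_bij:
  assumes "\<sigma> permutes {..<n}"
  shows "\<And>k. k < n \<Longrightarrow> pinv \<sigma> k < n" "\<And>j. j < n \<Longrightarrow> \<sigma> j < n"
    "\<And>k. \<sigma> (pinv \<sigma> k) = k" "\<And>j. pinv \<sigma> (\<sigma> j) = j"
  using assms permutes_inverses[OF assms] permutes_in_image[OF assms]
    permutes_in_image[OF permutes_inv[OF assms]] by auto

lemma sum_perm_delta:
  fixes n :: nat
  assumes "\<sigma> permutes {..<n}" "k < n"
  shows "(\<Sum>j\<in>{0..<n}. (if k = \<sigma> j then 1 else 0) * f j) = (f (pinv \<sigma> k) :: 'a :: semiring_1)"
proof -
  have "(\<Sum>j\<in>{0..<n}. (if k = \<sigma> j then 1 else 0) * f j) = (\<Sum>j\<in>{0..<n}. if j = pinv \<sigma> k then f j else 0)"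
    by (rule sum.cong) (use perm_bij[OF assms(1)] in auto)
  also have "\<dots> = f (pinv \<sigma> k)" using perm_bij[OF assms(1)] assms(2) by simp
  finally show ?thesis .
qed

lemma sum_perm_delta2:
  fixes n :: nat
  assumes "\<sigma> permutes {..<n}" "j < n"
  shows "(\<Sum>i\<in>{0..<n}. f i * (if i = \<sigma> j then 1 else 0)) = (f (\<sigma> j) :: 'a :: semiring_1)"
proof -
  have "(\<Sum>i\<in>{0..<n}. f i * (if i = \<sigma> j then 1 else 0)) = (\<Sum>i\<in>{0..<n}. if i = \<sigma> j then f i else 0)"
    by (rule sum.cong) auto
  also have "\<dots> = f (\<sigma> j)" using perm_bij[OF assms(1)] assms(2) by simp
  finally show ?thesis .
qed

lemma perm_mat_carrier[simp]: "perm_mat n \<sigma> \<in> carrier_mat n n"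
  unfolding perm_mat_def by simp

lemma perm_mat_dims[simp]: "dim_row (perm_mat n \<sigma>) = n" "dim_col (perm_mat n \<sigma>) = n"
  unfolding perm_mat_def by simp_all

lemma perm_mat_index: "k < n \<Longrightarrow> j < n \<Longrightarrow> perm_mat n \<sigma> $$ (k,j) = (if k = \<sigma> j then 1 else 0)"
  unfolding perm_mat_def by simp

lemma perm_mult_left:
  assumes "\<sigma> permutes {..<n'}" "R \<in> carrier_mat n' n" "k < n'" "j < n"
  shows "(perm_mat n' \<sigma> * R) $$ (k,j) = R $$ (pinv \<sigma> k, j)"
proof -
  have "(perm_mat n' \<sigma> * R) $$ (k,j) = (\<Sum>i\<in>{0..<n'}. (if k = \<sigma> i then 1 else 0) * R $$ (i,j))"
    using assms by (simp add: scalar_prod_def perm_mat_index)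
  also have "\<dots> = R $$ (pinv \<sigma> k, j)" by (rule sum_perm_delta[OF assms(1,3)])
  finally show ?thesis .
qed

lemma perm_mult_right:
  assumes "\<sigma> permutes {..<n}" "R \<in> carrier_mat n' n" "k < n'" "j < n"
  shows "(R * perm_mat n \<sigma>) $$ (k,j) = R $$ (k, \<sigma> j)"
proof -
  have "(R * perm_mat n \<sigma>) $$ (k,j) = (\<Sum>i\<in>{0..<n}. R $$ (k,i) * (if i = \<sigma> j then 1 else 0))"
    using assms by (simp add: scalar_prod_def perm_mat_index)
  also have "\<dots> = R $$ (k, \<sigma> j)" by (rule sum_perm_delta2[OF assms(1,4)])
  finally show ?thesis .
qed

lemma perm_mult_vec_left:
  assumes "\<sigma> permutes {..<n'}" "R \<in> carrier_mat n' n" "k < n'" "j < n"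
  shows "(perm_mat n' \<sigma> *\<^sub>v col R j) $ k = R $$ (pinv \<sigma> k, j)"
proof -
  have "(perm_mat n' \<sigma> *\<^sub>v col R j) $ k = (perm_mat n' \<sigma> * R) $$ (k,j)"
    using assms by (simp add: scalar_prod_def)
  then show ?thesis using perm_mult_left[OF assms] by simp
qed

lemma perm_mult_vec_right:
  assumes "\<sigma> permutes {..<n}" "R \<in> carrier_mat n' n" "k < n'" "j < n"
  shows "(R *\<^sub>v col (perm_mat n \<sigma>) j) $ k = R $$ (k, \<sigma> j)"
proof -
  have "(R *\<^sub>v col (perm_mat n \<sigma>) j) $ k = (R * perm_mat n \<sigma>) $$ (k,j)"
    using assms by (simp add: scalar_prod_def)
  then show ?thesis using perm_mult_right[OF assms] by simp
qed

lemma one_mat_0: "1\<^sub>m 0 = (0\<^sub>m 0 0 :: complex mat)"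
  by (rule eq_matI) auto

lemma two_morD:
  assumes "T \<in> two_mor R Rb" "R \<in> carrier_mat n' n" "i < n'" "j < n"
  shows "T $$ (i,j) \<in> carrier_mat (Rb $$ (i,j)) (R $$ (i,j))"
  using assms unfolding two_mor_def by auto

lemma two_mor_dims:
  assumes "T \<in> two_mor R Rb" "R \<in> carrier_mat n' n"
  shows "dim_row T = n'" "dim_col T = n"
  using assms unfolding two_mor_def by auto

lemma hcomp_left:
  assumes "\<sigma> permutes {..<n'}" "R \<in> carrier_mat n' n" "Rb \<in> carrier_mat n' n" "\<tau> \<in> two_mor R Rb"
  shows "hcomp (triv_gauge (perm_mat n' \<sigma>)) (triv_gauge (perm_mat n' \<sigma>)) R Rb (id2 (perm_mat n' \<sigma>)) \<tau>
    = mat n' n (\<lambda>(k,j). \<tau> $$ (pinv \<sigma> k, j))"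
proof (rule eq_matI)
  show "dim_row (hcomp (triv_gauge (perm_mat n' \<sigma>)) (triv_gauge (perm_mat n' \<sigma>)) R Rb (id2 (perm_mat n' \<sigma>)) \<tau>) =
    dim_row (mat n' n (\<lambda>(k,j). \<tau> $$ (pinv \<sigma> k, j)))"
    unfolding hcomp_def id2_def by simp
  show "dim_col (hcomp (triv_gauge (perm_mat n' \<sigma>)) (triv_gauge (perm_mat n' \<sigma>)) R Rb (id2 (perm_mat n' \<sigma>)) \<tau>) =
    dim_col (mat n' n (\<lambda>(k,j). \<tau> $$ (pinv \<sigma> k, j)))"
    unfolding hcomp_def id2_def using two_mor_dims[OF assms(4,2)] by simp
  fix k j assume k: "k < dim_row (mat n' n (\<lambda>(k,j). \<tau> $$ (pinv \<sigma> k, j)))"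
    and j: "j < dim_col (mat n' n (\<lambda>(k,j). \<tau> $$ (pinv \<sigma> k, j)))"
  then have k: "k < n'" and j: "j < n" by auto
  note pb = perm_bij[OF assms(1)]
  have i0: "pinv \<sigma> k < n'" using pb k by auto
  have ds: "dsum_list (map (\<lambda>i. kron (id2 (perm_mat n' \<sigma>) $$ (k,i)) (\<tau> $$ (i,j))) [0..<dim_col (id2 (perm_mat n' \<sigma>))])
     = kron (id2 (perm_mat n' \<sigma>) $$ (k,pinv \<sigma> k)) (\<tau> $$ (pinv \<sigma> k,j))"
  proof -
    have "dim_col (id2 (perm_mat n' \<sigma>)) = n'" unfolding id2_def by simp
    moreover have "dsum_list (map (\<lambda>i. kron (id2 (perm_mat n' \<sigma>) $$ (k,i)) (\<tau> $$ (i,j))) [0..<n'])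
     = kron (id2 (perm_mat n' \<sigma>) $$ (k,pinv \<sigma> k)) (\<tau> $$ (pinv \<sigma> k,j))"
    proof (rule dsum_list_single[OF i0])
      fix i assume "i < n'" "i \<noteq> pinv \<sigma> k"
      then have "k \<noteq> \<sigma> i" using pb by auto
      then have "id2 (perm_mat n' \<sigma>) $$ (k,i) = 1\<^sub>m 0"
        using \<open>i < n'\<close> k unfolding id2_def by (simp add: perm_mat_index)
      then show "kron (id2 (perm_mat n' \<sigma>) $$ (k,i)) (\<tau> $$ (i,j)) = 0\<^sub>m 0 0"
        by (simp add: kron_zero_left)
    qed
    ultimately show ?thesis by simp
  qed
  have "id2 (perm_mat n' \<sigma>) $$ (k,pinv \<sigma> k) = 1\<^sub>m 1"
    using i0 k pb unfolding id2_def by (simp add: perm_mat_index)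
  then have ds2: "dsum_list (map (\<lambda>i. kron (id2 (perm_mat n' \<sigma>) $$ (k,i)) (\<tau> $$ (i,j))) [0..<dim_col (id2 (perm_mat n' \<sigma>))])
     = \<tau> $$ (pinv \<sigma> k,j)" using ds kron_one_left[of "\<tau> $$ (pinv \<sigma> k, j)"] by simp
  have tc: "\<tau> $$ (pinv \<sigma> k,j) \<in> carrier_mat (Rb $$ (pinv \<sigma> k,j)) (R $$ (pinv \<sigma> k,j))"
    using two_morD[OF assms(4,2) i0 j] .
  have g1: "triv_gauge (perm_mat n' \<sigma>) k (col Rb j) = 1\<^sub>m (Rb $$ (pinv \<sigma> k,j))"
    unfolding triv_gauge_def using perm_mult_vec_left[OF assms(1,3) k j] by simp
  have g2: "triv_gauge (perm_mat n' \<sigma>) k (col R j) = 1\<^sub>m (R $$ (pinv \<sigma> k,j))"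
    unfolding triv_gauge_def using perm_mult_vec_left[OF assms(1,2) k j] by simp
  have dr: "dim_row (id2 (perm_mat n' \<sigma>)) = n'" unfolding id2_def by simp
  have dc: "dim_col \<tau> = n" using two_mor_dims[OF assms(4,2)] by simp
  show "hcomp (triv_gauge (perm_mat n' \<sigma>)) (triv_gauge (perm_mat n' \<sigma>)) R Rb (id2 (perm_mat n' \<sigma>)) \<tau> $$ (k,j)
    = mat n' n (\<lambda>(k,j). \<tau> $$ (pinv \<sigma> k, j)) $$ (k,j)"
    unfolding hcomp_def dr dc using k j ds2 g1 g2 tc by (simp add: minv_one)
qed

lemma kron_zero_right: "B \<in> carrier_mat 0 0 \<Longrightarrow> kron A B = 0\<^sub>m 0 0"
  unfolding kron_def by (rule eq_matI) auto

lemma hcomp_right: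
  assumes "\<sigma> permutes {..<n}" "R \<in> carrier_mat n' n" "Rb \<in> carrier_mat n' n" "\<tau> \<in> two_mor R Rb"
  shows "hcomp (triv_gauge R) (triv_gauge Rb) (perm_mat n \<sigma>) (perm_mat n \<sigma>) \<tau> (id2 (perm_mat n \<sigma>))
    = mat n' n (\<lambda>(k,j). \<tau> $$ (k, \<sigma> j))"
proof (rule eq_matI)
  have dr: "dim_row \<tau> = n'" and dc: "dim_col \<tau> = n" using two_mor_dims[OF assms(4,2)] by simp_all
  have dc2: "dim_col (id2 (perm_mat n \<sigma>)) = n" unfolding id2_def by simp
  show "dim_row (hcomp (triv_gauge R) (triv_gauge Rb) (perm_mat n \<sigma>) (perm_mat n \<sigma>) \<tau> (id2 (perm_mat n \<sigma>))) =
    dim_row (mat n' n (\<lambda>(k,j). \<tau> $$ (k, \<sigma> j)))"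
    unfolding hcomp_def using dr by simp
  show "dim_col (hcomp (triv_gauge R) (triv_gauge Rb) (perm_mat n \<sigma>) (perm_mat n \<sigma>) \<tau> (id2 (perm_mat n \<sigma>))) =
    dim_col (mat n' n (\<lambda>(k,j). \<tau> $$ (k, \<sigma> j)))"
    unfolding hcomp_def using dc2 by simp
  fix k j assume k: "k < dim_row (mat n' n (\<lambda>(k,j). \<tau> $$ (k, \<sigma> j)))"
    and j: "j < dim_col (mat n' n (\<lambda>(k,j). \<tau> $$ (k, \<sigma> j)))"
  then have k: "k < n'" and j: "j < n" by auto
  note pb = perm_bij[OF assms(1)]
  have i0: "\<sigma> j < n" using pb j by auto
  have ds: "dsum_list (map (\<lambda>i. kron (\<tau> $$ (k,i)) (id2 (perm_mat n \<sigma>) $$ (i,j))) [0..<n])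
     = kron (\<tau> $$ (k,\<sigma> j)) (id2 (perm_mat n \<sigma>) $$ (\<sigma> j,j))"
  proof (rule dsum_list_single[OF i0])
    fix i assume "i < n" "i \<noteq> \<sigma> j"
    then have "id2 (perm_mat n \<sigma>) $$ (i,j) = 1\<^sub>m 0"
      using j unfolding id2_def by (simp add: perm_mat_index)
    then show "kron (\<tau> $$ (k,i)) (id2 (perm_mat n \<sigma>) $$ (i,j)) = 0\<^sub>m 0 0"
      by (simp add: kron_zero_right)
  qed
  have "id2 (perm_mat n \<sigma>) $$ (\<sigma> j,j) = 1\<^sub>m 1"
    using i0 j unfolding id2_def by (simp add: perm_mat_index)
  then have ds2: "dsum_list (map (\<lambda>i. kron (\<tau> $$ (k,i)) (id2 (perm_mat n \<sigma>) $$ (i,j))) [0..<n])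
     = \<tau> $$ (k,\<sigma> j)" using ds kron_one_right[of "\<tau> $$ (k, \<sigma> j)"] by simp
  have tc: "\<tau> $$ (k,\<sigma> j) \<in> carrier_mat (Rb $$ (k,\<sigma> j)) (R $$ (k,\<sigma> j))"
    using two_morD[OF assms(4,2) k i0] .
  have g1: "triv_gauge Rb k (col (perm_mat n \<sigma>) j) = 1\<^sub>m (Rb $$ (k,\<sigma> j))"
    unfolding triv_gauge_def using perm_mult_vec_right[OF assms(1,3) k j] by simp
  have g2: "triv_gauge R k (col (perm_mat n \<sigma>) j) = 1\<^sub>m (R $$ (k,\<sigma> j))"
    unfolding triv_gauge_def using perm_mult_vec_right[OF assms(1,2) k j] by simp
  show "hcomp (triv_gauge R) (triv_gauge Rb) (perm_mat n \<sigma>) (perm_mat n \<sigma>) \<tau> (id2 (perm_mat n \<sigma>)) $$ (k,j)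
    = mat n' n (\<lambda>(k,j). \<tau> $$ (k, \<sigma> j)) $$ (k,j)"
    unfolding hcomp_def dr dc dc2 using k j ds2 g1 g2 tc by (simp add: minv_one)
qed

lemma mult_empty_mid: "A \<in> carrier_mat a 0 \<Longrightarrow> B \<in> carrier_mat 0 b \<Longrightarrow> A * B = (0\<^sub>m a b :: complex mat)"
  by (rule eq_matI) (auto simp: scalar_prod_def)

lemma Phi_of_index:
  "k < n' \<Longrightarrow> j < n \<Longrightarrow> Phi_of n n' \<rho> R S g $$ (k,j) =
     (if R $$ (k, \<rho> g j) \<noteq> 0 then S k (\<rho> g j) g else 0\<^sub>m (R $$ (k, \<rho> g j)) (R $$ (k, \<rho> g j)))"
  unfolding Phi_of_def Let_def by simp

lemma Phi_of_dims[simp]: "dim_row (Phi_of n n' \<rho> R S g) = n'" "dim_col (Phi_of n n' \<rho> R S g) = n"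
  unfolding Phi_of_def by simp_all

lemma triple_facts:
  assumes "triple_intertwiner G n n' \<rho> \<rho>' R S" "g \<in> carrier G"
    "\<rho> g permutes {..<n}" "\<rho>' g permutes {..<n'}"
  shows "R \<in> carrier_mat n' n"
    and "\<And>k i. k < n' \<Longrightarrow> i < n \<Longrightarrow> R $$ (pinv (\<rho>' g) k, pinv (\<rho> g) i) = R $$ (k,i)"
    and "\<And>k i. k < n' \<Longrightarrow> i < n \<Longrightarrow> R $$ (k,i) \<noteq> 0 \<Longrightarrow> S k i g \<in> carrier_mat (R $$ (k,i)) (R $$ (k,i))"
proof -
  show RC: "R \<in> carrier_mat n' n" using assms(1) unfolding triple_intertwiner_def by simp
  show SC: "\<And>k i. k < n' \<Longrightarrow> i < n \<Longrightarrow> R $$ (k,i) \<noteq> 0 \<Longrightarrow> S k i g \<in> carrier_mat (R $$ (k,i)) (R $$ (k,i))"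
    using assms(1,2) unfolding triple_intertwiner_def GL_mat_def by blast
  fix k i assume k: "k < n'" and i: "i < n"
  note pb = perm_bij[OF assms(3)]
  define j where "j = pinv (\<rho> g) i"
  have j: "j < n" and ij: "\<rho> g j = i" using pb i unfolding j_def by auto
  have tm: "Phi_of n n' \<rho> R S g \<in> two_mor (Fobj n' \<rho>' g * R) (R * Fobj n \<rho> g)"
    using assms(1,2) unfolding triple_intertwiner_def by blast
  have PR: "Fobj n' \<rho>' g * R \<in> carrier_mat n' n" using RC unfolding Fobj_def by (intro mult_carrier_mat[of _ n' n']) auto
  have "Phi_of n n' \<rho> R S g $$ (k,j) \<in> carrier_mat ((R * Fobj n \<rho> g) $$ (k,j)) ((Fobj n' \<rho>' g * R) $$ (k,j))"
    using two_morD[OF tm PR k j] .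
  moreover have "(R * Fobj n \<rho> g) $$ (k,j) = R $$ (k,i)"
    unfolding Fobj_def using perm_mult_right[OF assms(3) RC k j] ij by simp
  moreover have "(Fobj n' \<rho>' g * R) $$ (k,j) = R $$ (pinv (\<rho>' g) k, j)"
    unfolding Fobj_def using perm_mult_left[OF assms(4) RC k j] by simp
  moreover have "Phi_of n n' \<rho> R S g $$ (k,j) \<in> carrier_mat (R $$ (k,i)) (R $$ (k,i))"
    using Phi_of_index[OF k j, of \<rho> R S g] ij SC[OF k i] by auto
  ultimately show "R $$ (pinv (\<rho>' g) k, pinv (\<rho> g) i) = R $$ (k,i)"
    unfolding j_def by auto
qed

lemma pointwise:
  assumes tR: "triple_intertwiner G n n' \<rho> \<rho>' R S" and tRb: "triple_intertwiner G n n' \<rho> \<rho>' Rb Sb"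
    and g: "g \<in> carrier G" and ps: "\<rho> g permutes {..<n}" and ps': "\<rho>' g permutes {..<n'}"
    and tau: "\<tau> \<in> two_mor R Rb"
  shows "(vcomp (Phi_of n n' \<rho> Rb Sb g)
              (hcomp (triv_gauge (Fobj n' \<rho>' g)) (triv_gauge (Fobj n' \<rho>' g)) R Rb
                     (id2 (Fobj n' \<rho>' g)) \<tau>)
      = vcomp (hcomp (triv_gauge R) (triv_gauge Rb) (Fobj n \<rho> g) (Fobj n \<rho> g)
                     \<tau> (id2 (Fobj n \<rho> g)))
              (Phi_of n n' \<rho> R S g))
    \<longleftrightarrow> (\<forall>k<n'. \<forall>i<n. R $$ (k,i) \<noteq> 0 \<longrightarrow> Rb $$ (k,i) \<noteq> 0 \<longrightarrow>
          \<tau> $$ (k,i) * S k i g = Sb k i g * \<tau> $$ (pinv (\<rho>' g) k, pinv (\<rho> g) i))"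
    (is "?EQ \<longleftrightarrow> ?T")
proof -
  note fR = triple_facts[OF tR g ps ps'] and fRb = triple_facts[OF tRb g ps ps']
  note pb = perm_bij[OF ps] and pb' = perm_bij[OF ps']
  define E where "E k j \<longleftrightarrow> Phi_of n n' \<rho> Rb Sb g $$ (k,j) * \<tau> $$ (pinv (\<rho>' g) k, j)
     = \<tau> $$ (k, \<rho> g j) * Phi_of n n' \<rho> R S g $$ (k,j)" for k j
  have "?EQ \<longleftrightarrow> (\<forall>k<n'. \<forall>j<n. E k j)"
    unfolding Fobj_def hcomp_left[OF ps' fR(1) fRb(1) tau] hcomp_right[OF ps fR(1) fRb(1) tau]
      vcomp_def mat_eq_iff E_def by auto
  also have "\<dots> \<longleftrightarrow> (\<forall>k<n'. \<forall>i<n. E k (pinv (\<rho> g) i))"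
  proof
    assume "\<forall>k<n'. \<forall>j<n. E k j" then show "\<forall>k<n'. \<forall>i<n. E k (pinv (\<rho> g) i)" using pb by auto
  next
    assume a: "\<forall>k<n'. \<forall>i<n. E k (pinv (\<rho> g) i)"
    show "\<forall>k<n'. \<forall>j<n. E k j"
    proof (intro allI impI)
      fix k j assume "k < n'" "j < n"
      then have "E k (pinv (\<rho> g) (\<rho> g j))" using a pb(2) by blast
      then show "E k j" using pb(4) by metis
    qed
  qed
  also have "\<dots> \<longleftrightarrow> ?T"
  proof -
    have "E k (pinv (\<rho> g) i) \<longleftrightarrow> (R $$ (k,i) \<noteq> 0 \<longrightarrow> Rb $$ (k,i) \<noteq> 0 \<longrightarrow>
          \<tau> $$ (k,i) * S k i g = Sb k i g * \<tau> $$ (pinv (\<rho>' g) k, pinv (\<rho> g) i))"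
      if k: "k < n'" and i: "i < n" for k i
    proof -
      have j: "pinv (\<rho> g) i < n" and ij: "\<rho> g (pinv (\<rho> g) i) = i" using pb i by auto
      have k': "pinv (\<rho>' g) k < n'" using pb' k by auto
      have t1: "\<tau> $$ (k,i) \<in> carrier_mat (Rb $$ (k,i)) (R $$ (k,i))"
        using two_morD[OF tau fR(1) k i] .
      have t2: "\<tau> $$ (pinv (\<rho>' g) k, pinv (\<rho> g) i) \<in> carrier_mat (Rb $$ (k,i)) (R $$ (k,i))"
        using two_morD[OF tau fR(1) k' j] fR(2)[OF k i] fRb(2)[OF k i] by simp
      have P1: "Phi_of n n' \<rho> Rb Sb g $$ (k, pinv (\<rho> g) i) =
          (if Rb $$ (k,i) \<noteq> 0 then Sb k i g else 0\<^sub>m (Rb $$ (k,i)) (Rb $$ (k,i)))"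
        using Phi_of_index[OF k j, of \<rho>] ij by simp
      have P2: "Phi_of n n' \<rho> R S g $$ (k, pinv (\<rho> g) i) =
          (if R $$ (k,i) \<noteq> 0 then S k i g else 0\<^sub>m (R $$ (k,i)) (R $$ (k,i)))"
        using Phi_of_index[OF k j, of \<rho>] ij by simp
      have c1: "Phi_of n n' \<rho> Rb Sb g $$ (k, pinv (\<rho> g) i) \<in> carrier_mat (Rb $$ (k,i)) (Rb $$ (k,i))"
        using P1 fRb(3)[OF k i] by auto
      have c2: "Phi_of n n' \<rho> R S g $$ (k, pinv (\<rho> g) i) \<in> carrier_mat (R $$ (k,i)) (R $$ (k,i))"
        using P2 fR(3)[OF k i] by auto
      have m1: "Phi_of n n' \<rho> Rb Sb g $$ (k, pinv (\<rho> g) i) * \<tau> $$ (pinv (\<rho>' g) k, pinv (\<rho> g) i)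
         \<in> carrier_mat (Rb $$ (k,i)) (R $$ (k,i))" using c1 t2 by simp
      have m2: "\<tau> $$ (k,i) * Phi_of n n' \<rho> R S g $$ (k, pinv (\<rho> g) i)
         \<in> carrier_mat (Rb $$ (k,i)) (R $$ (k,i))" using c2 t1 by simp
      show ?thesis
      proof (cases "R $$ (k,i) = 0 \<or> Rb $$ (k,i) = 0")
        case True
        then show ?thesis unfolding E_def ij using mat_empty_eq[OF m1 m2] by auto
      next
        case False
        then show ?thesis unfolding E_def ij P1 P2 by auto
      qed
    qed
    then show ?thesis by blast
  qed
  finally show ?thesis .
qed

lemma char:
  assumes pr: "perm_rep G n \<rho>" and pr': "perm_rep G n' \<rho>'"
    and tR: "triple_intertwiner G n n' \<rho> \<rho>' R S" and tRb: "triple_intertwiner G n n' \<rho> \<rho>' Rb Sb"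
  shows "two_intertwiners G n n' \<rho> \<rho>' R S Rb Sb =
           {T \<in> two_mor R Rb. \<forall>i'<n'. \<forall>i<n. R $$ (i',i) \<noteq> 0 \<longrightarrow> Rb $$ (i',i) \<noteq> 0 \<longrightarrow>
              (\<forall>g\<in>carrier G. T $$ (i',i) * S i' i g
                 = Sb i' i g * T $$ (pinv (\<rho>' g) i', pinv (\<rho> g) i))}"
proof -
  have "T \<in> two_intertwiners G n n' \<rho> \<rho>' R S Rb Sb \<longleftrightarrow>
        T \<in> {T \<in> two_mor R Rb. \<forall>i'<n'. \<forall>i<n. R $$ (i',i) \<noteq> 0 \<longrightarrow> Rb $$ (i',i) \<noteq> 0 \<longrightarrow>
              (\<forall>g\<in>carrier G. T $$ (i',i) * S i' i g
                 = Sb i' i g * T $$ (pinv (\<rho>' g) i', pinv (\<rho> g) i))}" for T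
  proof (cases "T \<in> two_mor R Rb")
    case True
    have "\<And>g. g \<in> carrier G \<Longrightarrow> \<rho> g permutes {..<n}" "\<And>g. g \<in> carrier G \<Longrightarrow> \<rho>' g permutes {..<n'}"
      using pr pr' unfolding perm_rep_def by auto
    note pw = pointwise[OF tR tRb _ this(1) this(2) True]
    show ?thesis unfolding two_intertwiners_def using True pw by auto
  next
    case False
    then show ?thesis unfolding two_intertwiners_def by auto
  qed
  then show ?thesis by blast
qed

theorem mainTheorem12:
  fixes G :: "('g,'x) monoid_scheme" and M :: "('u,'y) monoid_scheme"
    and act :: "'g \<Rightarrow> 'u \<Rightarrow> 'u" and \<alpha> :: "'g \<Rightarrow> 'g \<Rightarrow> 'g \<Rightarrow> 'u"
    and n n' :: nat and \<rho> \<rho>' :: "'g \<Rightarrow> nat \<Rightarrow> nat"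
    and \<beta> \<beta>' :: "'u \<Rightarrow> nat \<Rightarrow> complex" and c c' :: "'g \<Rightarrow> 'g \<Rightarrow> nat \<Rightarrow> complex"
    and R Rb Rbb :: "nat mat" and S Sb Sbb :: "nat \<Rightarrow> nat \<Rightarrow> 'g \<Rightarrow> complex mat"
  assumes "special_2group_data G M act \<alpha>"
    and "admissible G M act \<alpha> n \<rho> \<beta> c"
    and "admissible G M act \<alpha> n' \<rho>' \<beta>' c'"
    and "triple_intertwiner G n n' \<rho> \<rho>' R S"
    and "triple_intertwiner G n n' \<rho> \<rho>' Rb Sb"
    and "triple_intertwiner G n n' \<rho> \<rho>' Rbb Sbb"
  shows "two_intertwiners G n n' \<rho> \<rho>' R S Rb Sb =
           {T \<in> two_mor R Rb. \<forall>i'<n'. \<forall>i<n. R $$ (i',i) \<noteq> 0 \<longrightarrow> Rb $$ (i',i) \<noteq> 0 \<longrightarrow>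
              (\<forall>g\<in>carrier G. T $$ (i',i) * S i' i g
                 = Sb i' i g * T $$ (pinv (\<rho>' g) i', pinv (\<rho> g) i))}
       \<and> (\<forall>T \<in> two_intertwiners G n n' \<rho> \<rho>' R S Rb Sb.
           \<forall>Tb \<in> two_intertwiners G n n' \<rho> \<rho>' Rb Sb Rbb Sbb.
             vcomp Tb T \<in> two_intertwiners G n n' \<rho> \<rho>' R S Rbb Sbb
             \<and> vcomp Tb T = mat n' n (\<lambda>(i',i). Tb $$ (i',i) * T $$ (i',i)))"
proof -
  have pr: "perm_rep G n \<rho>" and pr': "perm_rep G n' \<rho>'"
    using assms(2,3) unfolding admissible_def by auto
  note ch1 = char[OF pr pr' assms(4) assms(5)]
  note ch2 = char[OF pr pr' assms(5) assms(6)]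
  note ch3 = char[OF pr pr' assms(4) assms(6)]
  have ps: "\<And>g. g \<in> carrier G \<Longrightarrow> \<rho> g permutes {..<n}" and ps': "\<And>g. g \<in> carrier G \<Longrightarrow> \<rho>' g permutes {..<n'}"
    using pr pr' unfolding perm_rep_def by auto
  have RC: "R \<in> carrier_mat n' n" and RbC: "Rb \<in> carrier_mat n' n" and RbbC: "Rbb \<in> carrier_mat n' n"
    using assms(4,5,6) unfolding triple_intertwiner_def by auto
  have part2: "vcomp Tb T \<in> two_intertwiners G n n' \<rho> \<rho>' R S Rbb Sbb
             \<and> vcomp Tb T = mat n' n (\<lambda>(i',i). Tb $$ (i',i) * T $$ (i',i))"
    if T: "T \<in> two_intertwiners G n n' \<rho> \<rho>' R S Rb Sb"
      and Tb: "Tb \<in> two_intertwiners G n n' \<rho> \<rho>' Rb Sb Rbb Sbb" for T Tb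
  proof -
    have Tm: "T \<in> two_mor R Rb" and Tc: "\<forall>i'<n'. \<forall>i<n. R $$ (i',i) \<noteq> 0 \<longrightarrow> Rb $$ (i',i) \<noteq> 0 \<longrightarrow>
              (\<forall>g\<in>carrier G. T $$ (i',i) * S i' i g
                 = Sb i' i g * T $$ (pinv (\<rho>' g) i', pinv (\<rho> g) i))"
      using T ch1 by auto
    have Tbm: "Tb \<in> two_mor Rb Rbb" and Tbc: "\<forall>i'<n'. \<forall>i<n. Rb $$ (i',i) \<noteq> 0 \<longrightarrow> Rbb $$ (i',i) \<noteq> 0 \<longrightarrow>
              (\<forall>g\<in>carrier G. Tb $$ (i',i) * Sb i' i g
                 = Sbb i' i g * Tb $$ (pinv (\<rho>' g) i', pinv (\<rho> g) i))"
      using Tb ch2 by auto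
    have VC: "vcomp Tb T = mat n' n (\<lambda>(i',i). Tb $$ (i',i) * T $$ (i',i))"
      unfolding vcomp_def using two_mor_dims[OF Tm RC] by simp
    have Vm: "vcomp Tb T \<in> two_mor R Rbb"
      unfolding VC two_mor_def using RC RbbC two_morD[OF Tm RC] two_morD[OF Tbm RbC]
      by (auto intro!: mult_carrier_mat)
    have Vc: "\<forall>i'<n'. \<forall>i<n. R $$ (i',i) \<noteq> 0 \<longrightarrow> Rbb $$ (i',i) \<noteq> 0 \<longrightarrow>
              (\<forall>g\<in>carrier G. vcomp Tb T $$ (i',i) * S i' i g
                 = Sbb i' i g * vcomp Tb T $$ (pinv (\<rho>' g) i', pinv (\<rho> g) i))"
    proof (intro allI impI ballI)
      fix k i g assume k: "k < n'" and i: "i < n" and R0: "R $$ (k,i) \<noteq> 0" and Rbb0: "Rbb $$ (k,i) \<noteq> 0"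
        and g: "g \<in> carrier G"
      note pb = perm_bij[OF ps[OF g]] and pb' = perm_bij[OF ps'[OF g]]
      define k' where "k' = pinv (\<rho>' g) k"
      define i' where "i' = pinv (\<rho> g) i"
      have k': "k' < n'" and i': "i' < n" using pb pb' k i unfolding k'_def i'_def by auto
      note fR = triple_facts[OF assms(4) g ps[OF g] ps'[OF g]]
      note fRb = triple_facts[OF assms(5) g ps[OF g] ps'[OF g]]
      note fRbb = triple_facts[OF assms(6) g ps[OF g] ps'[OF g]]
      have t1: "T $$ (k,i) \<in> carrier_mat (Rb $$ (k,i)) (R $$ (k,i))" using two_morD[OF Tm RC k i] .
      have t2: "T $$ (k',i') \<in> carrier_mat (Rb $$ (k,i)) (R $$ (k,i))"
        using two_morD[OF Tm RC k' i'] fR(2)[OF k i] fRb(2)[OF k i] unfolding k'_def i'_def by simp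
      have b1: "Tb $$ (k,i) \<in> carrier_mat (Rbb $$ (k,i)) (Rb $$ (k,i))" using two_morD[OF Tbm RbC k i] .
      have b2: "Tb $$ (k',i') \<in> carrier_mat (Rbb $$ (k,i)) (Rb $$ (k,i))"
        using two_morD[OF Tbm RbC k' i'] fRb(2)[OF k i] fRbb(2)[OF k i] unfolding k'_def i'_def by simp
      have sc: "S k i g \<in> carrier_mat (R $$ (k,i)) (R $$ (k,i))" using fR(3)[OF k i R0] .
      have sbbc: "Sbb k i g \<in> carrier_mat (Rbb $$ (k,i)) (Rbb $$ (k,i))" using fRbb(3)[OF k i Rbb0] .
      have e1: "vcomp Tb T $$ (k,i) = Tb $$ (k,i) * T $$ (k,i)" unfolding VC using k i by simp
      have e2: "vcomp Tb T $$ (k',i') = Tb $$ (k',i') * T $$ (k',i')" unfolding VC using k' i' by simp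
      have main: "Tb $$ (k,i) * T $$ (k,i) * S k i g = Sbb k i g * (Tb $$ (k',i') * T $$ (k',i'))"
      proof (cases "Rb $$ (k,i) = 0")
        case True
        have z1: "Tb $$ (k,i) * T $$ (k,i) = 0\<^sub>m (Rbb $$ (k,i)) (R $$ (k,i))"
          using b1 t1 True by (intro mult_empty_mid) auto
        have z2: "Tb $$ (k',i') * T $$ (k',i') = 0\<^sub>m (Rbb $$ (k,i)) (R $$ (k,i))"
          using b2 t2 True by (intro mult_empty_mid) auto
        show "Tb $$ (k,i) * T $$ (k,i) * S k i g = Sbb k i g * (Tb $$ (k',i') * T $$ (k',i'))"
          unfolding z1 z2 using sc sbbc by (simp add: left_mult_zero_mat right_mult_zero_mat)
      next
        case False
        have sbc: "Sb k i g \<in> carrier_mat (Rb $$ (k,i)) (Rb $$ (k,i))" using fRb(3)[OF k i False] .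
        have h1: "T $$ (k,i) * S k i g = Sb k i g * T $$ (k',i')"
          using Tc k i R0 False g unfolding k'_def i'_def by blast
        have h2: "Tb $$ (k,i) * Sb k i g = Sbb k i g * Tb $$ (k',i')"
          using Tbc k i Rbb0 False g unfolding k'_def i'_def by blast
        have "Tb $$ (k,i) * T $$ (k,i) * S k i g = Tb $$ (k,i) * (T $$ (k,i) * S k i g)"
          using b1 t1 sc by (simp add: assoc_mult_mat)
        also have "\<dots> = Tb $$ (k,i) * (Sb k i g * T $$ (k',i'))" using h1 by simp
        also have "\<dots> = (Tb $$ (k,i) * Sb k i g) * T $$ (k',i')"
          using b1 sbc t2 by (simp add: assoc_mult_mat)
        also have "\<dots> = (Sbb k i g * Tb $$ (k',i')) * T $$ (k',i')" using h2 by simp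
        also have "\<dots> = Sbb k i g * (Tb $$ (k',i') * T $$ (k',i'))"
          using sbbc b2 t2 by (simp add: assoc_mult_mat)
        finally show "Tb $$ (k,i) * T $$ (k,i) * S k i g = Sbb k i g * (Tb $$ (k',i') * T $$ (k',i'))" .
      qed
      show "vcomp Tb T $$ (k,i) * S k i g = Sbb k i g * vcomp Tb T $$ (pinv (\<rho>' g) k, pinv (\<rho> g) i)"
        using main e1 e2 unfolding k'_def i'_def by simp
    qed
    show ?thesis using Vm Vc VC ch3 by auto
  qed
  show ?thesis using ch1 part2 by blast
qed
end
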